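(* Let $\Gamma$ be a finite connected $d$-valent graph with a GKM axial function $\alpha$, a compatible connection $\theta$, and a polarizing vector $\xi$, and suppose $\Gamma$ admits a family of Thom classes $\{\tau_p^+\}_{p\in V_\Gamma}$ as in the context. Let $e$ be an ascending edge from $p$ to $q$. If $e$ is the only ascending path from $p$ to $q$, then $\sigma_q\le\sigma_p+1$.
   Context: $\mathfrak g$ is the Lie algebra of a torus $G$, $\mathfrak S(\mathfrak g^* )$ the polynomial ring on $\mathfrak g$, graded by degree. Oriented edges $e$ have initial vertex $i(e)$, terminal vertex $t(e)$, and reverse $\bar e$; $E_p=\{e:i(e)=p\}$. An axial function $\alpha:e\mapsto\alpha_e\in\mathfrak g^*$ satisfies $\alpha_{\bar e}=-\alpha_e$ and is GKM if for each $p$ the $\alpha_e$, $e\in E_p$, are pairwise linearly independent. A compatible connection assigns to each oriented $e$ a bijection $\theta_e:E_{i(e)}\to E_{t(e)}$ with $\theta_{\bar e}=\theta_e^{-1}$, $\theta_e(e)=\bar e$, and $\alpha_{\theta_e(e')}-\alpha_{e'}\in\mathbb R\alpha_e$ for $e'\in E_{i(e)}$. $H(\Gamma,\alpha)$ is the ring of maps $h:V_\Gamma\to\mathfrak S(\mathfrak g^* )$ with $\alpha_e\mid h(i(e))-h(t(e))$ for every edge; $H^k$ consists of those with values in degree-$k$ polynomials; it is a module over $\mathfrak S(\mathfrak g^* )$. $\xi\in\mathfrak g$ is polarizing if $\alpha_e(\xi)\ne0$ for all $e$; $e$ is ascending if $\alpha_e(\xi)>0$, descending otherwise; paths are ascending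 if all edges are. $\sigma_p$ = number of descending edges in $E_p$, $E_p^-$ the set of these; $F_p$ = vertices reachable from $p$ by an ascending path (including $p$). A family of Thom classes is a family $\tau_p^+\in H^{\sigma_p}(\Gamma,\alpha)$, $p\in V_\Gamma$, freely generating $H(\Gamma,\alpha)$ as an $\mathfrak S(\mathfrak g^* )$-module, with $\tau_p^+$ vanishing outside $F_p$ and $\tau_p^+(p)=\prod_{e\in E_p^-}\alpha_e$. *)

theory Defs
  imports Complex_Main "HOL-Library.Poly_Mapping"
begin

text \<open>The torus Lie algebra g is modelled as real^'n for a finite index type 'n;
  elements of g (e.g. the polarizing vector) and of g* (axial values) are functions
  'n => real (coordinates w.r.t. a basis and its dual basis).  The symmetric algebra
  S(g*) is the real polynomial ring in the variables indexed by 'n, realised as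
  finitely supported maps from monomials (exponent vectors) to coefficients.\<close>

type_synonym 'n spoly = "('n \<Rightarrow>\<^sub>0 nat) \<Rightarrow>\<^sub>0 real"

definition lin :: "('n::finite \<Rightarrow> real) \<Rightarrow> 'n spoly" where
  "lin a = (\<Sum>i\<in>UNIV. Poly_Mapping.single (Poly_Mapping.single i 1) (a i))"

definition homogeneous :: "nat \<Rightarrow> 'n spoly \<Rightarrow> bool" where
  "homogeneous k P \<longleftrightarrow> (\<forall>m\<in>Poly_Mapping.keys P. (\<Sum>i\<in>Poly_Mapping.keys m. Poly_Mapping.lookup m i) = k)"

definition pair_ev :: "('n::finite \<Rightarrow> real) \<Rightarrow> ('n \<Rightarrow> real) \<Rightarrow> real" where
  "pair_ev a \<xi> = (\<Sum>i\<in>UNIV. a i * \<xi> i)"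

definition lin_indep2 :: "('n \<Rightarrow> real) \<Rightarrow> ('n \<Rightarrow> real) \<Rightarrow> bool" where
  "lin_indep2 a b \<longleftrightarrow> (\<forall>x y::real. (\<forall>i. x * a i + y * b i = 0) \<longrightarrow> x = 0 \<and> y = 0)"

definition out_edges :: "'e set \<Rightarrow> ('e \<Rightarrow> 'v) \<Rightarrow> 'v \<Rightarrow> 'e set" where
  "out_edges E ie p = {e\<in>E. ie e = p}"

definition is_graph :: "'v set \<Rightarrow> 'e set \<Rightarrow> ('e \<Rightarrow> 'v) \<Rightarrow> ('e \<Rightarrow> 'v) \<Rightarrow> ('e \<Rightarrow> 'e) \<Rightarrow> bool" where
  "is_graph V E ie te rv \<longleftrightarrow> finite V \<and> finite E \<and>
     (\<forall>e\<in>E. ie e \<in> V \<and> te e \<in> V \<and> rv e \<in> E \<and> rv e \<noteq> e \<and> rv (rv e) = e \<and>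
             ie (rv e) = te e \<and> te (rv e) = ie e)"

primrec is_path :: "'e set \<Rightarrow> ('e \<Rightarrow> 'v) \<Rightarrow> ('e \<Rightarrow> 'v) \<Rightarrow> 'v \<Rightarrow> 'e list \<Rightarrow> 'v \<Rightarrow> bool" where
  "is_path E ie te p [] q \<longleftrightarrow> p = q"
| "is_path E ie te p (e # es) q \<longleftrightarrow> e \<in> E \<and> ie e = p \<and> is_path E ie te (te e) es q"

definition connected_graph :: "'v set \<Rightarrow> 'e set \<Rightarrow> ('e \<Rightarrow> 'v) \<Rightarrow> ('e \<Rightarrow> 'v) \<Rightarrow> bool" where
  "connected_graph V E ie te \<longleftrightarrow> (\<forall>p\<in>V. \<forall>q\<in>V. \<exists>es. is_path E ie te p es q)"

definition regular :: "nat \<Rightarrow> 'v set \<Rightarrow> 'e set \<Rightarrow> ('e \<Rightarrow> 'v) \<Rightarrow> bool" where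
  "regular d V E ie \<longleftrightarrow> (\<forall>p\<in>V. card (out_edges E ie p) = d)"

definition axial :: "'e set \<Rightarrow> ('e \<Rightarrow> 'e) \<Rightarrow> ('e \<Rightarrow> 'n \<Rightarrow> real) \<Rightarrow> bool" where
  "axial E rv \<alpha> \<longleftrightarrow> (\<forall>e\<in>E. \<alpha> (rv e) = - \<alpha> e)"

definition GKM_axial :: "'v set \<Rightarrow> 'e set \<Rightarrow> ('e \<Rightarrow> 'v) \<Rightarrow> ('e \<Rightarrow> 'e) \<Rightarrow> ('e \<Rightarrow> 'n \<Rightarrow> real) \<Rightarrow> bool" where
  "GKM_axial V E ie rv \<alpha> \<longleftrightarrow> axial E rv \<alpha> \<and>
     (\<forall>p\<in>V. \<forall>e\<in>out_edges E ie p. \<forall>e'\<in>out_edges E ie p. e \<noteq> e' \<longrightarrow> lin_indep2 (\<alpha> e) (\<alpha> e'))"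

definition compatible_connection ::
  "'e set \<Rightarrow> ('e \<Rightarrow> 'v) \<Rightarrow> ('e \<Rightarrow> 'v) \<Rightarrow> ('e \<Rightarrow> 'e) \<Rightarrow> ('e \<Rightarrow> 'n \<Rightarrow> real) \<Rightarrow> ('e \<Rightarrow> 'e \<Rightarrow> 'e) \<Rightarrow> bool" where
  "compatible_connection E ie te rv \<alpha> \<theta> \<longleftrightarrow>
     (\<forall>e\<in>E. bij_betw (\<theta> e) (out_edges E ie (ie e)) (out_edges E ie (te e)) \<and>
            (\<forall>e'\<in>out_edges E ie (ie e). \<theta> (rv e) (\<theta> e e') = e') \<and>
            \<theta> e e = rv e \<and>
            (\<forall>e'\<in>out_edges E ie (ie e). \<exists>c::real. \<alpha> (\<theta> e e') - \<alpha> e' = (\<lambda>i. c * \<alpha> e i)))"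

definition polarizing :: "'e set \<Rightarrow> ('e \<Rightarrow> 'n::finite \<Rightarrow> real) \<Rightarrow> ('n \<Rightarrow> real) \<Rightarrow> bool" where
  "polarizing E \<alpha> \<xi> \<longleftrightarrow> (\<forall>e\<in>E. pair_ev (\<alpha> e) \<xi> \<noteq> 0)"

definition ascending :: "('e \<Rightarrow> 'n::finite \<Rightarrow> real) \<Rightarrow> ('n \<Rightarrow> real) \<Rightarrow> 'e \<Rightarrow> bool" where
  "ascending \<alpha> \<xi> e \<longleftrightarrow> pair_ev (\<alpha> e) \<xi> > 0"

definition asc_path ::
  "'e set \<Rightarrow> ('e \<Rightarrow> 'v) \<Rightarrow> ('e \<Rightarrow> 'v) \<Rightarrow> ('e \<Rightarrow> 'n::finite \<Rightarrow> real) \<Rightarrow> ('n \<Rightarrow> real) \<Rightarrow> 'v \<Rightarrow> 'e list \<Rightarrow> 'v \<Rightarrow> bool" where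
  "asc_path E ie te \<alpha> \<xi> p es q \<longleftrightarrow> is_path E ie te p es q \<and> (\<forall>e\<in>set es. ascending \<alpha> \<xi> e)"

definition desc_edges :: "'e set \<Rightarrow> ('e \<Rightarrow> 'v) \<Rightarrow> ('e \<Rightarrow> 'n::finite \<Rightarrow> real) \<Rightarrow> ('n \<Rightarrow> real) \<Rightarrow> 'v \<Rightarrow> 'e set" where
  "desc_edges E ie \<alpha> \<xi> p = {e\<in>out_edges E ie p. \<not> ascending \<alpha> \<xi> e}"

definition sigma :: "'e set \<Rightarrow> ('e \<Rightarrow> 'v) \<Rightarrow> ('e \<Rightarrow> 'n::finite \<Rightarrow> real) \<Rightarrow> ('n \<Rightarrow> real) \<Rightarrow> 'v \<Rightarrow> nat" where
  "sigma E ie \<alpha> \<xi> p = card (desc_edges E ie \<alpha> \<xi> p)"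

definition flow_up ::
  "'v set \<Rightarrow> 'e set \<Rightarrow> ('e \<Rightarrow> 'v) \<Rightarrow> ('e \<Rightarrow> 'v) \<Rightarrow> ('e \<Rightarrow> 'n::finite \<Rightarrow> real) \<Rightarrow> ('n \<Rightarrow> real) \<Rightarrow> 'v \<Rightarrow> 'v set" where
  "flow_up V E ie te \<alpha> \<xi> p = {q\<in>V. \<exists>es. asc_path E ie te \<alpha> \<xi> p es q}"

definition GKM_ring ::
  "'v set \<Rightarrow> 'e set \<Rightarrow> ('e \<Rightarrow> 'v) \<Rightarrow> ('e \<Rightarrow> 'v) \<Rightarrow> ('e \<Rightarrow> 'n::finite \<Rightarrow> real) \<Rightarrow> ('v \<Rightarrow> 'n spoly) set" where
  "GKM_ring V E ie te \<alpha> = {h. (\<forall>x. x \<notin> V \<longrightarrow> h x = 0) \<and>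
                               (\<forall>e\<in>E. lin (\<alpha> e) dvd (h (ie e) - h (te e)))}"

definition GKM_ring_deg ::
  "'v set \<Rightarrow> 'e set \<Rightarrow> ('e \<Rightarrow> 'v) \<Rightarrow> ('e \<Rightarrow> 'v) \<Rightarrow> ('e \<Rightarrow> 'n::finite \<Rightarrow> real) \<Rightarrow> nat \<Rightarrow> ('v \<Rightarrow> 'n spoly) set" where
  "GKM_ring_deg V E ie te \<alpha> k = {h\<in>GKM_ring V E ie te \<alpha>. \<forall>p\<in>V. homogeneous k (h p)}"

definition thom_classes ::
  "'v set \<Rightarrow> 'e set \<Rightarrow> ('e \<Rightarrow> 'v) \<Rightarrow> ('e \<Rightarrow> 'v) \<Rightarrow> ('e \<Rightarrow> 'n::finite \<Rightarrow> real) \<Rightarrow> ('n \<Rightarrow> real)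
    \<Rightarrow> ('v \<Rightarrow> 'v \<Rightarrow> 'n spoly) \<Rightarrow> bool" where
  "thom_classes V E ie te \<alpha> \<xi> \<tau> \<longleftrightarrow>
     (\<forall>p\<in>V. \<tau> p \<in> GKM_ring_deg V E ie te \<alpha> (sigma E ie \<alpha> \<xi> p) \<and>
             (\<forall>q\<in>V - flow_up V E ie te \<alpha> \<xi> p. \<tau> p q = 0) \<and>
             \<tau> p p = (\<Prod>e\<in>desc_edges E ie \<alpha> \<xi> p. lin (\<alpha> e))) \<and>
     (\<forall>h\<in>GKM_ring V E ie te \<alpha>. \<exists>!f. (\<forall>p. p \<notin> V \<longrightarrow> f p = 0) \<and>
          h = (\<lambda>q. \<Sum>p\<in>V. f p * \<tau> p q))"

end

theory Submission imports Defs "HOL-Computational_Algebra.Polynomial"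
begin

definition mon :: "('n::finite \<Rightarrow> real poly) \<Rightarrow> ('n \<Rightarrow>\<^sub>0 nat) \<Rightarrow> real poly" where
  "mon x m = (\<Prod>i\<in>UNIV. x i ^ Poly_Mapping.lookup m i)"

definition phi :: "('n::finite \<Rightarrow> real poly) \<Rightarrow> 'n spoly \<Rightarrow> real poly" where
  "phi x P = (\<Sum>m\<in>Poly_Mapping.keys P. smult (Poly_Mapping.lookup P m) (mon x m))"

lemma phi_superset:
  assumes "finite S" "Poly_Mapping.keys P \<subseteq> S"
  shows "phi x P = (\<Sum>m\<in>S. smult (Poly_Mapping.lookup P m) (mon x m))"
  unfolding phi_def
  by (rule sum.mono_neutral_left[OF assms(1,2)]) (auto simp: in_keys_iff)

lemma phi_add: "phi x (P + Q) = phi x P + phi x Q"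
proof -
  let ?S = "Poly_Mapping.keys P \<union> Poly_Mapping.keys Q"
  have "phi x (P + Q) = (\<Sum>m\<in>?S. smult (Poly_Mapping.lookup (P+Q) m) (mon x m))"
    by (rule phi_superset) (auto simp: keys_add)
  also have "\<dots> = (\<Sum>m\<in>?S. smult (Poly_Mapping.lookup P m) (mon x m))
      + (\<Sum>m\<in>?S. smult (Poly_Mapping.lookup Q m) (mon x m))"
    by (simp add: lookup_add smult_add_left sum.distrib)
  also have "\<dots> = phi x P + phi x Q"
    by (subst (1 2) phi_superset[of ?S]) auto
  finally show ?thesis .
qed

lemma phi_zero[simp]: "phi x 0 = 0"
  by (simp add: phi_def)

lemma phi_diff: "phi x (P - Q) = phi x P - phi x Q"
  using phi_add[of x "P - Q" Q] by (simp add: algebra_simps)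

lemma phi_sum: "finite A \<Longrightarrow> phi x (\<Sum>a\<in>A. f a) = (\<Sum>a\<in>A. phi x (f a))"
  by (induction A rule: finite_induct) (auto simp: phi_add)

lemma phi_single[simp]: "phi x (Poly_Mapping.single m c) = smult c (mon x m)"
  by (cases "c = 0") (auto simp: phi_def)

lemma mon_add: "mon x (m + m') = mon x m * mon x m'"
  by (simp add: mon_def lookup_add power_add prod.distrib)

lemma mon_zero[simp]: "mon x 0 = 1"
  by (simp add: mon_def)

lemma pm_expand: "P = (\<Sum>m\<in>Poly_Mapping.keys P. Poly_Mapping.single m (Poly_Mapping.lookup P m))"
  by (rule poly_mapping_eqI) (auto simp: lookup_sum lookup_single when_def in_keys_iff
     intro: sum.neutral sym[OF trans[OF sum.remove]] simp del: )

lemma phi_mult: "phi x (P * Q) = phi x P * phi x Q"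
proof -
  have "P * Q = (\<Sum>m\<in>Poly_Mapping.keys P. \<Sum>m'\<in>Poly_Mapping.keys Q.
      Poly_Mapping.single m (Poly_Mapping.lookup P m) * Poly_Mapping.single m' (Poly_Mapping.lookup Q m'))"
    by (subst (1) pm_expand, subst (1) pm_expand[of Q]) (rule sum_product)
  then have "phi x (P * Q) = (\<Sum>m\<in>Poly_Mapping.keys P. \<Sum>m'\<in>Poly_Mapping.keys Q.
      smult (Poly_Mapping.lookup P m) (mon x m) * smult (Poly_Mapping.lookup Q m') (mon x m'))"
    by (simp add: phi_sum mult_single mon_add mult.commute mult.left_commute)
  also have "\<dots> = phi x P * phi x Q"
    by (simp only: phi_def sum_product)
  finally show ?thesis .
qed

lemma phi_one[simp]: "phi x 1 = 1"
  by (simp flip: single_one)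

lemma phi_prod: "phi x (\<Prod>a\<in>A. f a) = (\<Prod>a\<in>A. phi x (f a))"
  by (induction A rule: infinite_finite_induct) (auto simp: phi_mult)

lemma phi_dvd: "P dvd Q \<Longrightarrow> phi x P dvd phi x Q"
  by (auto simp: phi_mult dvd_def)

lemma mon_single: "mon x (Poly_Mapping.single i 1) = x i"
proof -
  have "mon x (Poly_Mapping.single i 1) = (\<Prod>j\<in>UNIV. if j = i then x i else 1)"
    unfolding mon_def by (rule prod.cong) (auto simp: lookup_single when_def)
  also have "\<dots> = x i" by (simp add: prod.delta)
  finally show ?thesis .
qed

lemma mon_single': "mon x (Poly_Mapping.single i (Suc 0)) = x i"
  using mon_single[of x i] by simp

lemma poly_phi_lin: "poly (phi (\<lambda>i. [:a i, b i:]) (lin c)) t = pair_ev c a + t * pair_ev c b"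
  by (simp add: lin_def phi_sum mon_single' poly_sum pair_ev_def sum_distrib_left sum.distrib algebra_simps)

lemma degree_mon: assumes "\<And>i. degree (x i) \<le> 1"
  shows "degree (mon x m) \<le> (\<Sum>i\<in>Poly_Mapping.keys m. Poly_Mapping.lookup m i)"
proof -
  have "degree (mon x m) \<le> (\<Sum>i\<in>UNIV. degree (x i ^ Poly_Mapping.lookup m i))"
    unfolding mon_def using degree_prod_sum_le[OF finite_UNIV, of "\<lambda>i. x i ^ Poly_Mapping.lookup m i"] by (simp add: o_def)
  also have "\<dots> \<le> (\<Sum>i\<in>UNIV. Poly_Mapping.lookup m i)"
  proof (rule sum_mono)
    fix i
    have "degree (x i ^ Poly_Mapping.lookup m i) \<le> degree (x i) * Poly_Mapping.lookup m i"
      by (rule degree_power_le)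
    also have "\<dots> \<le> Poly_Mapping.lookup m i" using assms[of i] by simp
    finally show "degree (x i ^ Poly_Mapping.lookup m i) \<le> Poly_Mapping.lookup m i" .
  qed
  also have "\<dots> = (\<Sum>i\<in>Poly_Mapping.keys m. Poly_Mapping.lookup m i)"
    by (rule sum.mono_neutral_right) (auto simp: in_keys_iff)
  finally show ?thesis .
qed

lemma degree_phi: assumes "\<And>i. degree (x i) \<le> 1" "homogeneous k P"
  shows "degree (phi x P) \<le> k"
  unfolding phi_def
proof (rule degree_sum_le)
  fix m assume "m \<in> Poly_Mapping.keys P"
  then have "(\<Sum>i\<in>Poly_Mapping.keys m. Poly_Mapping.lookup m i) = k"
    using assms(2) by (simp add: homogeneous_def)
  then show "degree (smult (Poly_Mapping.lookup P m) (mon x m)) \<le> k"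
    using degree_mon[of x m, OF assms(1)] degree_smult_le[of "Poly_Mapping.lookup P m" "mon x m"] by linarith
qed simp

lemma pair_ev_shift: "pair_ev h (\<lambda>i. a i + t * g i) = pair_ev h a + t * pair_ev h g"
  by (simp add: pair_ev_def algebra_simps sum.distrib sum_distrib_left)

lemma pair_ev_self_pos: assumes "(g::'n::finite \<Rightarrow> real) \<noteq> (\<lambda>_. 0)" shows "pair_ev g g > 0"
proof -
  obtain i where "g i \<noteq> 0" using assms by (auto simp: fun_eq_iff)
  then show ?thesis unfolding pair_ev_def
    by (intro sum_pos2[where i=i]) (auto simp: not_square_less_zero zero_less_mult_iff)
qed

lemma avoid_hyperplanes:
  fixes G :: "('n::finite \<Rightarrow> real) set"
  assumes "finite G" "\<forall>g\<in>G. g \<noteq> (\<lambda>_. 0)"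
  shows "\<exists>a. \<forall>g\<in>G. pair_ev g a \<noteq> 0"
  using assms
proof (induction G rule: finite_induct)
  case empty then show ?case by simp
next
  case (insert g G)
  then obtain a where a: "\<forall>h\<in>G. pair_ev h a \<noteq> 0" by auto
  have gg: "pair_ev g g > 0" using insert pair_ev_self_pos by auto
  let ?B = "(\<lambda>h. - pair_ev h a / pair_ev h g) ` insert g G"
  have "finite ?B" using insert by simp
  then obtain t where t: "t \<notin> ?B"
    by (metis ex_new_if_finite infinite_UNIV_char_0 UNIV_I)
  have "\<forall>h\<in>insert g G. pair_ev h (\<lambda>i. a i + t * g i) \<noteq> 0"
  proof
    fix h assume h: "h \<in> insert g G"
    show "pair_ev h (\<lambda>i. a i + t * g i) \<noteq> 0"
    proof (cases "pair_ev h g = 0")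
      case True
      then have "h \<in> G" using h gg by auto
      then show ?thesis using True a by (simp add: pair_ev_shift)
    next
      case False
      have "t \<noteq> - pair_ev h a / pair_ev h g" using t h by auto
      then show ?thesis using False by (simp add: pair_ev_shift field_simps)
    qed
  qed
  then show ?case by blast
qed

lemma is_path_append:
  "is_path E ie te p (xs @ ys) r \<longleftrightarrow> (\<exists>m. is_path E ie te p xs m \<and> is_path E ie te m ys r)"
  by (induction xs arbitrary: p) auto


definition gam :: "('e \<Rightarrow> 'n::finite \<Rightarrow> real) \<Rightarrow> ('n \<Rightarrow> real) \<Rightarrow> 'e \<Rightarrow> 'e \<Rightarrow> 'n \<Rightarrow> real" where
  "gam \<alpha> \<xi> c1 c2 = (\<lambda>i. pair_ev (\<alpha> c2) \<xi> * \<alpha> c1 i - pair_ev (\<alpha> c1) \<xi> * \<alpha> c2 i)"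

lemma gam_nonzero:
  assumes "lin_indep2 (\<alpha> c1) (\<alpha> c2)" "pair_ev (\<alpha> c2) \<xi> \<noteq> 0"
  shows "gam \<alpha> \<xi> c1 c2 \<noteq> (\<lambda>_. 0)"
proof
  assume "gam \<alpha> \<xi> c1 c2 = (\<lambda>_. 0)"
  then have "\<forall>i. pair_ev (\<alpha> c2) \<xi> * \<alpha> c1 i + (- pair_ev (\<alpha> c1) \<xi>) * \<alpha> c2 i = 0"
    by (auto simp: gam_def fun_eq_iff)
  then show False using assms unfolding lin_indep2_def by blast
qed

lemma pair_ev_gam: "pair_ev (gam \<alpha> \<xi> c1 c2) a = pair_ev (\<alpha> c2) \<xi> * pair_ev (\<alpha> c1) a - pair_ev (\<alpha> c1) \<xi> * pair_ev (\<alpha> c2) a"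
  by (simp add: gam_def pair_ev_def sum_subtractf sum_distrib_left algebra_simps)

lemma pair_ev_uminus: "pair_ev (- c) x = - pair_ev c x"
  by (simp add: pair_ev_def sum_negf)

theorem theorem4p2:
  fixes V :: "'v set" and E :: "'e set" and ie te :: "'e \<Rightarrow> 'v" and rv :: "'e \<Rightarrow> 'e"
    and d :: nat and \<alpha> :: "'e \<Rightarrow> 'n::finite \<Rightarrow> real" and \<theta> :: "'e \<Rightarrow> 'e \<Rightarrow> 'e"
    and \<xi> :: "'n \<Rightarrow> real" and \<tau> :: "'v \<Rightarrow> 'v \<Rightarrow> 'n spoly"
    and e :: 'e and p q :: 'v
  assumes "is_graph V E ie te rv"
    and "connected_graph V E ie te"
    and "regular d V E ie"
    and "GKM_axial V E ie rv \<alpha>"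
    and "compatible_connection E ie te rv \<alpha> \<theta>"
    and "polarizing E \<alpha> \<xi>"
    and "thom_classes V E ie te \<alpha> \<xi> \<tau>"
    and "e \<in> E" and "ie e = p" and "te e = q" and "ascending \<alpha> \<xi> e"
    and "\<forall>es. asc_path E ie te \<alpha> \<xi> p es q \<longrightarrow> es = [e]"
  shows "sigma E ie \<alpha> \<xi> q \<le> sigma E ie \<alpha> \<xi> p + 1"
proof -
  note G = assms(1)[unfolded is_graph_def]
  have finE: "finite E" using G by blast
  have pV: "p \<in> V" and qV: "q \<in> V" using G assms(8,9,10) by auto
  have ax: "\<And>e'. e' \<in> E \<Longrightarrow> \<alpha> (rv e') = - \<alpha> e'"
    using assms(4) by (auto simp: GKM_axial_def axial_def)
  have indep: "\<And>r e1 e2. r \<in> V \<Longrightarrow> e1 \<in> out_edges E ie r \<Longrightarrow> e2 \<in> out_edges E ie r \<Longrightarrow> e1 \<noteq> e2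
      \<Longrightarrow> lin_indep2 (\<alpha> e1) (\<alpha> e2)"
    using assms(4) by (auto simp: GKM_axial_def)
  have pol: "\<And>e'. e' \<in> E \<Longrightarrow> pair_ev (\<alpha> e') \<xi> \<noteq> 0"
    using assms(6) by (auto simp: polarizing_def)
  have descneg: "\<And>r e'. e' \<in> desc_edges E ie \<alpha> \<xi> r \<Longrightarrow> e' \<in> E \<and> ie e' = r \<and> pair_ev (\<alpha> e') \<xi> < 0"
  proof -
    fix r e' assume "e' \<in> desc_edges E ie \<alpha> \<xi> r"
    then have "e' \<in> E" "ie e' = r" "\<not> pair_ev (\<alpha> e') \<xi> > 0"
      by (auto simp: desc_edges_def out_edges_def ascending_def)
    then show "e' \<in> E \<and> ie e' = r \<and> pair_ev (\<alpha> e') \<xi> < 0" using pol[of e'] by auto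
  qed
  have finD: "\<And>r. finite (desc_edges E ie \<alpha> \<xi> r)"
    using finE by (auto simp: desc_edges_def out_edges_def)
  have epos: "pair_ev (\<alpha> e) \<xi> > 0" using assms(11) by (simp add: ascending_def)
  have rve: "rv e \<in> desc_edges E ie \<alpha> \<xi> q"
    using G assms(8,10) epos ax[OF assms(8)]
    by (auto simp: desc_edges_def out_edges_def ascending_def pair_ev_uminus)
  define D where "D = desc_edges E ie \<alpha> \<xi> q - {rv e}"
  have cardD: "card D = sigma E ie \<alpha> \<xi> q - 1"
    unfolding D_def sigma_def using rve finD by (simp add: card_Diff_singleton)
  have finDD: "finite D" unfolding D_def using finD by simp
  note T = assms(7)[unfolded thom_classes_def]
  have tauR: "\<tau> p \<in> GKM_ring_deg V E ie te \<alpha> (sigma E ie \<alpha> \<xi> p)"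
    and tau0: "\<And>r. r \<in> V - flow_up V E ie te \<alpha> \<xi> p \<Longrightarrow> \<tau> p r = 0"
    and taupp: "\<tau> p p = (\<Prod>e\<in>desc_edges E ie \<alpha> \<xi> p. lin (\<alpha> e))"
    using T pV by auto
  have dvdE: "\<And>e'. e' \<in> E \<Longrightarrow> lin (\<alpha> e') dvd (\<tau> p (ie e') - \<tau> p (te e'))"
    using tauR by (auto simp: GKM_ring_deg_def GKM_ring_def)
  have hom: "homogeneous (sigma E ie \<alpha> \<xi> p) (\<tau> p q)"
    using tauR qV by (auto simp: GKM_ring_deg_def)
  have dvde: "lin (\<alpha> e) dvd (\<tau> p p - \<tau> p q)"
    using dvdE[OF assms(8)] assms(9,10) by simp
  have divD: "lin (\<alpha> e') dvd \<tau> p q" if e'D: "e' \<in> D" for e'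
  proof -
    have e': "e' \<in> E" "ie e' = q" "pair_ev (\<alpha> e') \<xi> < 0" "e' \<noteq> rv e"
      using descneg[of e' q] e'D by (auto simp: D_def)
    let ?r = "te e'"
    have rV: "?r \<in> V" using G e' by auto
    have "?r \<notin> flow_up V E ie te \<alpha> \<xi> p"
    proof
      assume "?r \<in> flow_up V E ie te \<alpha> \<xi> p"
      then obtain es where es: "asc_path E ie te \<alpha> \<xi> p es ?r" by (auto simp: flow_up_def)
      have "rv e' \<in> E" "ie (rv e') = ?r" "te (rv e') = q" using G e' by auto
      moreover have "ascending \<alpha> \<xi> (rv e')"
        using ax[OF e'(1)] e'(3) by (simp add: ascending_def pair_ev_uminus)
      ultimately have "asc_path E ie te \<alpha> \<xi> p (es @ [rv e']) q"
        using es by (auto simp: asc_path_def is_path_append)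
      then have "es @ [rv e'] = [e]" using assms(12) by blast
      then have "rv e' = e" by (cases es) auto
      then have "e' = rv e" using G e'(1) by metis
      then show False using e' by simp
    qed
    then have "\<tau> p ?r = 0" using tau0 rV by blast
    then show ?thesis using dvdE[OF e'(1)] e'(2) by simp
  qed
  define GS where "GS = (\<lambda>(e1, e2). gam \<alpha> \<xi> e1 e2) ` {(e1, e2). e1 \<in> D \<and> e2 \<in> D \<and> e1 \<noteq> e2}
      \<union> gam \<alpha> \<xi> e ` desc_edges E ie \<alpha> \<xi> p"
  have "finite GS" unfolding GS_def using finDD finD
    by (auto intro: finite_subset[of _ "D \<times> D"])
  moreover have "\<forall>g\<in>GS. g \<noteq> (\<lambda>_. 0)"
  proof -
    have A: "gam \<alpha> \<xi> e1 e2 \<noteq> (\<lambda>_. 0)" if "e1 \<in> D" "e2 \<in> D" "e1 \<noteq> e2" for e1 e2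
      using that descneg[of e1 q] descneg[of e2 q] qV
      by (intro gam_nonzero indep[of q]) (auto simp: D_def out_edges_def)
    have B: "gam \<alpha> \<xi> e e2 \<noteq> (\<lambda>_. 0)" if "e2 \<in> desc_edges E ie \<alpha> \<xi> p" for e2
      using that descneg[of e2 p] pV assms(8,9) epos
      by (intro gam_nonzero indep[of p]) (auto simp: out_edges_def)
    show ?thesis
    proof (unfold GS_def, intro ballI, elim UnE imageE)
      fix g pr assume "g = (\<lambda>(e1, e2). gam \<alpha> \<xi> e1 e2) pr" "pr \<in> {(e1, e2). e1 \<in> D \<and> e2 \<in> D \<and> e1 \<noteq> e2}"
      then show "g \<noteq> (\<lambda>_. 0)" using A by (cases pr) auto
    next
      fix g e2 assume "g = gam \<alpha> \<xi> e e2" "e2 \<in> desc_edges E ie \<alpha> \<xi> p"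
      then show "g \<noteq> (\<lambda>_. 0)" using B by auto
    qed
  qed
  ultimately obtain a where a: "\<forall>g\<in>GS. pair_ev g a \<noteq> 0"
    using avoid_hyperplanes by blast
  define x where "x = (\<lambda>i. [:a i, \<xi> i:])"
  define rt where "rt = (\<lambda>c. - pair_ev (\<alpha> c) a / pair_ev (\<alpha> c) \<xi>)"
  have polylin: "poly (phi x (lin (\<alpha> c))) t = pair_ev (\<alpha> c) a + t * pair_ev (\<alpha> c) \<xi>" for c t
    unfolding x_def by (rule poly_phi_lin)
  have rootlin: "poly (phi x (lin (\<alpha> c))) (rt c) = 0" if "c \<in> E" for c
    using pol[OF that] unfolding polylin rt_def by (simp add: field_simps)
  have dvdroot: "poly (phi x Q) (rt c) = 0" if cE: "c \<in> E" and cdvd: "lin (\<alpha> c) dvd Q" for c Q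
  proof -
    obtain k where "Q = lin (\<alpha> c) * k" using cdvd by (auto elim: dvdE)
    then show ?thesis using rootlin[OF cE] by (simp add: phi_mult)
  qed
  have rt_eq: "pair_ev (gam \<alpha> \<xi> c1 c2) a = 0" if "c1 \<in> E" "c2 \<in> E" "rt c1 = rt c2" for c1 c2
    using that pol[of c1] pol[of c2] unfolding pair_ev_gam rt_def by (simp add: field_simps)
  define f where "f = phi x (\<tau> p q)"
  have fnz: "f \<noteq> 0"
  proof
    assume f0: "f = 0"
    have "poly (phi x (\<tau> p p - \<tau> p q)) (rt e) = 0" by (rule dvdroot[OF assms(8) dvde])
    then have "(\<Prod>e''\<in>desc_edges E ie \<alpha> \<xi> p. poly (phi x (lin (\<alpha> e''))) (rt e)) = 0"
      using f0 by (simp add: f_def phi_diff taupp phi_prod poly_prod)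
    then obtain e'' where e'': "e'' \<in> desc_edges E ie \<alpha> \<xi> p" "poly (phi x (lin (\<alpha> e''))) (rt e) = 0"
      using finD by (auto simp: prod_zero_iff)
    have e''E: "e'' \<in> E" using descneg[OF e''(1)] by simp
    have "rt e'' = rt e"
      using e''(2) pol[OF e''E] unfolding polylin rt_def by (simp add: field_simps)
    then have "pair_ev (gam \<alpha> \<xi> e e'') a = 0" using rt_eq assms(8) e''E by metis
    moreover have "gam \<alpha> \<xi> e e'' \<in> GS" using e''(1) unfolding GS_def by auto
    ultimately show False using a by auto
  qed
  have degf: "degree f \<le> sigma E ie \<alpha> \<xi> p"
    unfolding f_def by (rule degree_phi[OF _ hom]) (simp add: x_def)
  have sub: "rt ` D \<subseteq> {t. poly f t = 0}"
  proof
    fix t assume "t \<in> rt ` D"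
    then obtain e' where "e' \<in> D" "t = rt e'" by auto
    moreover have "e' \<in> E" using \<open>e' \<in> D\<close> descneg unfolding D_def by blast
    ultimately show "t \<in> {t. poly f t = 0}" using dvdroot divD f_def by auto
  qed
  have inj: "inj_on rt D"
  proof (rule inj_onI)
    fix e1 e2 assume "e1 \<in> D" "e2 \<in> D" "rt e1 = rt e2"
    moreover have "e1 \<in> E" "e2 \<in> E" using \<open>e1 \<in> D\<close> \<open>e2 \<in> D\<close> descneg unfolding D_def by blast+
    ultimately show "e1 = e2" using rt_eq a unfolding GS_def by blast
  qed
  have "card D = card (rt ` D)" using inj by (simp add: card_image)
  also have "\<dots> \<le> card {t. poly f t = 0}"
    by (rule card_mono[OF poly_roots_finite[OF fnz] sub])
  also have "\<dots> \<le> degree f" by (rule card_poly_roots_bound[OF fnz])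
  finally show ?thesis using cardD degf by linarith
qed

end
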